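(* Let $\gamma>0$ (arising as $\lim n_i/g_i$ for a sequence of global function fields over $\mathbb{F}_q$ with genera $g_i\to\infty$ and $n_i$ rational places), $m\ge1$, and let $y>0$, $x_1,\dots,x_m\ge0$, $\sigma\ge0$ be real numbers with $y+2\sum_{\ell=1}^m(\ell+1)x_\ell+\sigma/\gamma<1$. Let $\bar t_m=2x_m$ and $\bar t_\ell=2x_\ell+\sum_{\nu=\ell+1}^mx_\nu$ for $1\le\ell\le m-1$. Define $t_1^*$ by $2t_1^*+\sum_{\ell=2}^m(\ell+1)\bar t_\ell=2\sum_{\ell=1}^m(\ell+1)x_\ell$, and for $2\le\ell\le m$ define $t_\ell^*$ inductively by $(\ell+1)t^*_\ell-(\ell+1)\bar t_\ell=\ell t^*_{\ell-1}-\ell\bar t_{\ell-1}$. Let $u=t_1^*+\sum_{\ell=2}^m\ell\bar t_\ell$. Assume: (C1) $\sigma/\gamma\le y/(q-1)$; (C2) for each $1\le\ell\le m$: $\bar t_\ell(y+\sigma/\gamma+u)^{2\ell}<\bigl(1-y-\sigma/\gamma-2\sum_{\nu=1}^m(\nu+1)x_\nu\bigr)^{\ell+1}(y+\sigma/\gamma)^\ell$; (C3) $\frac\sigma\gamma(1-y)<y^2$; (C4) for each $1\le\ell\le m-1$: $(\bar t_{\ell+1})^{\ell+1}(y+\sigma/\gamma+u)\le(t^*_\ell)^{\ell+2}$. Then $I_{y,x_1,\dots,x_m}(\sigma)=S(\sigma,y,0,t_1^*,\bar t_2,\bar t_3,\dots,\bar t_m)$.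
   Context: $E(x)=-x\log_qx-(1-x)\log_q(1-x)$ for $0<x<1$, $E(0)=E(1)=0$. With $T=t_1+\cdots+t_m$ and $W=t_1+2t_2+\cdots+mt_m$: $S(\sigma,y,x,t_1,\dots,t_m)=E(t_m)+\sum_{\ell=1}^{m-1}\bigl(1-\sum_{\nu=\ell+1}^mt_\nu\bigr)E\bigl(\frac{t_\ell}{1-\sum_{\nu=\ell+1}^mt_\nu}\bigr)+(1-T)E\bigl(\frac{y+x+W}{1-T}\bigr)+Z$, where $Z=(y+\sigma/\gamma+W)E\bigl(\frac{y+x+W}{y+\sigma/\gamma+W}\bigr)$ if $\frac{y+x+W}{y+\sigma/\gamma+W}\ge1-\frac1q$ and $Z=(y+\sigma/\gamma+W)-(y+x+W)\log_q(q-1)$ otherwise. $I_{y,x_1,\dots,x_m}(\sigma)$ is the maximum of $S(\sigma,y,x,t_1,\dots,t_m)$ over all real $x,t_1,\dots,t_m$ with $0\le x\le\sigma/\gamma$, $0\le t_\ell\le2x_\ell+\sum_{\nu=\ell+1}^mx_\nu$ ($1\le\ell\le m$), and $\sum_{\ell=1}^m(\ell+1)t_\ell\le2\sum_{\ell=1}^m(\ell+1)x_\ell$. *)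

theory Defs
  imports Complex_Main "HOL-Computational_Algebra.Primes"
begin

text \<open>q-ary entropy function E, with E(0)=E(1)=0 (value outside [0,1] irrelevant).\<close>
definition Ent :: "nat \<Rightarrow> real \<Rightarrow> real" where
  "Ent q x = (if 0 < x \<and> x < 1
              then - x * log (real q) x - (1 - x) * log (real q) (1 - x) else 0)"

definition Sfun :: "nat \<Rightarrow> real \<Rightarrow> nat \<Rightarrow> real \<Rightarrow> real \<Rightarrow> real \<Rightarrow> (nat \<Rightarrow> real) \<Rightarrow> real" where
  "Sfun q \<gamma> m \<sigma> y x t =
    (let T = (\<Sum>l=1..m. t l);
         W = (\<Sum>l=1..m. real l * t l);
         D = y + \<sigma> / \<gamma> + W;
         N = y + x + W;
         Z = (if N / D \<ge> 1 - 1 / real q then D * Ent q (N / D)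
              else D - N * log (real q) (real q - 1))
     in Ent q (t m)
        + (\<Sum>l=1..m-1. (1 - (\<Sum>\<nu>=l+1..m. t \<nu>)) * Ent q (t l / (1 - (\<Sum>\<nu>=l+1..m. t \<nu>))))
        + (1 - T) * Ent q (N / (1 - T))
        + Z)"

definition feasible :: "real \<Rightarrow> nat \<Rightarrow> real \<Rightarrow> (nat \<Rightarrow> real) \<Rightarrow> real \<Rightarrow> (nat \<Rightarrow> real) \<Rightarrow> bool" where
  "feasible \<gamma> m \<sigma> xs x t \<longleftrightarrow>
     0 \<le> x \<and> x \<le> \<sigma> / \<gamma> \<and>
     (\<forall>l\<in>{1..m}. 0 \<le> t l \<and> t l \<le> 2 * xs l + (\<Sum>\<nu>=l+1..m. xs \<nu>)) \<and>
     (\<Sum>l=1..m. real (l + 1) * t l) \<le> 2 * (\<Sum>l=1..m. real (l + 1) * xs l)"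

definition Ifun :: "nat \<Rightarrow> real \<Rightarrow> nat \<Rightarrow> real \<Rightarrow> (nat \<Rightarrow> real) \<Rightarrow> real \<Rightarrow> real" where
  "Ifun q \<gamma> m y xs \<sigma> =
     Sup {Sfun q \<gamma> m \<sigma> y x t | x t. feasible \<gamma> m \<sigma> xs x t}"

definition tbar :: "nat \<Rightarrow> (nat \<Rightarrow> real) \<Rightarrow> nat \<Rightarrow> real" where
  "tbar m xs l = 2 * xs l + (\<Sum>\<nu>=l+1..m. xs \<nu>)"

text \<open>t^*_1 from 2 t^*_1 + sum_{l=2}^m (l+1) tbar_l = 2 sum (l+1) x_l;
  (l+1) t^*_l - (l+1) tbar_l = l t^*_{l-1} - l tbar_{l-1} for 2 \<le> l \<le> m.\<close>
fun tstar :: "nat \<Rightarrow> (nat \<Rightarrow> real) \<Rightarrow> nat \<Rightarrow> real" where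
  "tstar m xs 0 = 0"
| "tstar m xs (Suc 0) =
     (2 * (\<Sum>l=1..m. real (l + 1) * xs l) - (\<Sum>l=2..m. real (l + 1) * tbar m xs l)) / 2"
| "tstar m xs (Suc (Suc k)) =
     tbar m xs (k + 2)
     + (real (k + 2) * tstar m xs (Suc k) - real (k + 2) * tbar m xs (Suc k)) / real (k + 3)"

definition ustar :: "nat \<Rightarrow> (nat \<Rightarrow> real) \<Rightarrow> real" where
  "ustar m xs = tstar m xs 1 + (\<Sum>l=2..m. real l * tbar m xs l)"

end

theory Submission
  imports Defs
begin



definition ph :: "real \<Rightarrow> real" where "ph p = - p * ln p"

lemma ph0[simp]: "ph 0 = 0" and ph1[simp]: "ph 1 = 0" by (simp_all add: ph_def)

lemma Ent_ln:
  assumes q: "real q \<ge> 2" and a: "0 \<le> a" "a \<le> 1"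
  shows "Ent q a * ln (real q) = ph a + ph (1 - a)"
proof -
  have lq: "ln (real q) > 0" using q by simp
  show ?thesis
  proof (cases "0 < a \<and> a < 1")
    case True
    then show ?thesis using lq by (simp add: Ent_def ph_def log_def field_simps)
  next
    case False
    then have "a = 0 \<or> a = 1" using a by auto
    then show ?thesis by (auto simp: Ent_def)
  qed
qed

lemma R_ph: assumes "R > 0" "b \<ge> 0" shows "R * ph (b / R) = ph b + b * ln R"
proof (cases "b = 0")
  case True then show ?thesis by simp
next
  case False
  then have "b > 0" using assms by simp
  then show ?thesis using assms by (simp add: ph_def ln_div field_simps)
qed

lemma Ent_scaled:
  assumes q: "real q \<ge> 2" and R: "R > 0" and a: "0 \<le> a" "a \<le> R"
  shows "R * Ent q (a / R) * ln (real q) = ph a + ph (R - a) - ph R"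
proof -
  have "R * Ent q (a / R) * ln (real q) = R * (ph (a/R) + ph (1 - a/R))"
    using Ent_ln[OF q, of "a/R"] a R by simp
  also have "1 - a/R = (R - a)/R" using R by (simp add: field_simps)
  also have "R * (ph (a/R) + ph ((R - a)/R)) = ph a + a * ln R + (ph (R - a) + (R - a) * ln R)"
    using R_ph[OF R, of a] R_ph[OF R, of "R - a"] a by (simp add: distrib_left)
  also have "\<dots> = ph a + ph (R - a) - ph R" by (simp add: ph_def algebra_simps)
  finally show ?thesis .
qed

lemma ph_tangent: assumes "a > 0" "p \<ge> 0" shows "ph p - ph a \<le> (- ln a - 1) * (p - a)"
proof (cases "p = 0")
  case True then show ?thesis using assms by (simp add: ph_def algebra_simps)
next
  case False
  then have p: "p > 0" using assms by simp
  have "ln (a / p) \<le> a / p - 1" using ln_le_minus_one[of "a/p"] p assms by simp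
  then have "p * ln (a / p) \<le> p * (a / p - 1)" using p by (simp add: mult_left_mono)
  moreover have "ln (a / p) = ln a - ln p" using p assms by (simp add: ln_div)
  moreover have "p * (a / p - 1) = a - p" using p by (simp add: field_simps)
  ultimately have "p * (ln a - ln p) \<le> a - p" by simp
  then show ?thesis by (simp add: ph_def algebra_simps)
qed

lemma ph_tangent': assumes "a > 0 \<or> p = a" "p \<ge> 0" shows "ph p - ph a \<le> (- ln a - 1) * (p - a)"
  using assms ph_tangent by auto

lemma pers_bound:
  assumes N: "N > 0" "N \<le> D" and al: "0 < \<alpha>" "\<alpha> \<le> 1" and eq: "\<alpha> = 1 \<Longrightarrow> D = N"
  shows "ph N + ph (D - N) - ph D \<le> - N * ln \<alpha> - (D - N) * ln (1 - \<alpha>)"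
proof (cases "\<alpha> = 1")
  case True then show ?thesis using eq by simp
next
  case False
  then have a1: "\<alpha> < 1" using al by simp
  have D: "D > 0" using N by simp
  have 1: "ph N - ph (\<alpha>*D) \<le> (- ln (\<alpha>*D) - 1) * (N - \<alpha>*D)"
    using ph_tangent[of "\<alpha>*D" N] al D N by simp
  have 2: "ph (D-N) - ph ((1-\<alpha>)*D) \<le> (- ln ((1-\<alpha>)*D) - 1) * ((D-N) - (1-\<alpha>)*D)"
    using ph_tangent[of "(1-\<alpha>)*D" "D-N"] a1 D N by simp
  have l1: "ln (\<alpha>*D) = ln \<alpha> + ln D" using al D by (simp add: ln_mult)
  have l2: "ln ((1-\<alpha>)*D) = ln (1-\<alpha>) + ln D" using a1 D by (simp add: ln_mult)
  have 3: "ph (\<alpha>*D) = - \<alpha>*D*(ln \<alpha> + ln D)" using l1 by (simp add: ph_def)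
  have 4: "ph ((1-\<alpha>)*D) = - (1-\<alpha>)*D*(ln (1-\<alpha>) + ln D)" unfolding ph_def l2 by (simp add: algebra_simps)
  show ?thesis using 1 2 3 4 l1 l2 unfolding ph_def[of D]
    by (simp add: algebra_simps)
qed

lemma pers_eq:
  assumes N: "N > 0" "N \<le> D"
  shows "ph N + ph (D - N) - ph D = - N * ln (N/D) - (D - N) * ln (1 - N/D)"
proof (cases "N = D")
  case True then show ?thesis by simp
next
  case False
  then have "D - N > 0" using N by simp
  moreover have e: "1 - N/D = (D - N)/D" using N by (simp add: field_simps)
  ultimately show ?thesis using N unfolding e by (simp add: ph_def ln_div algebra_simps)
qed




lemma telescope_ph: fixes f :: "nat \<Rightarrow> real" shows "(\<Sum>l=1..n. f (l - 1) - f l) = f 0 - f n"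
proof (induct n)
  case 0 then show ?case by simp
next
  case (Suc n) then show ?case by (simp add: sum.cl_ivl_Suc)
qed

lemma sum_nonneg_sub:
  assumes "\<forall>l\<in>{1..m}. (t::nat\<Rightarrow>real) l \<ge> 0" "1 \<le> a"
  shows "(\<Sum>\<nu>=a..m. t \<nu>) \<le> (\<Sum>l=1..m. t l)"
  by (rule sum_mono2) (use assms in auto)

lemma Sfun_decomp:
  assumes q: "real q \<ge> 2" and m: "m \<ge> 1"
    and t: "\<forall>l\<in>{1..m}. t l \<ge> 0"
    and y: "y > 0" and x: "0 \<le> x" "x \<le> \<sigma>/\<gamma>"
    and small: "y + x + (\<Sum>l=1..m. real (l+1) * t l) < 1"
    and reg: "(y + x + (\<Sum>l=1..m. real l * t l)) / (y + \<sigma>/\<gamma> + (\<Sum>l=1..m. real l * t l)) \<ge> 1 - 1 / real q"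
  shows "Sfun q \<gamma> m \<sigma> y x t * ln (real q) =
      (\<Sum>l=1..m. ph (t l)) + ph (y + x + (\<Sum>l=1..m. real l * t l))
      + ph (1 - (\<Sum>l=1..m. t l) - (y + x + (\<Sum>l=1..m. real l * t l)))
      + (ph (y + x + (\<Sum>l=1..m. real l * t l)) + ph (\<sigma>/\<gamma> - x)
         - ph (y + \<sigma>/\<gamma> + (\<Sum>l=1..m. real l * t l)))"
proof -
  define T where "T = (\<Sum>l=1..m. t l)"
  define W where "W = (\<Sum>l=1..m. real l * t l)"
  define D where "D = y + \<sigma>/\<gamma> + W"
  define N where "N = y + x + W"
  define Rt where "Rt l = 1 - (\<Sum>\<nu>=l+1..m. t \<nu>)" for l
  have lq: "ln (real q) > 0" using q by simp
  have W0: "W \<ge> 0" unfolding W_def using t by (intro sum_nonneg) auto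
  have T0: "T \<ge> 0" unfolding T_def using t by (intro sum_nonneg) auto
  have TW: "T + W = (\<Sum>l=1..m. real (l+1) * t l)"
    unfolding T_def W_def by (simp add: sum.distrib[symmetric] algebra_simps)
  have TN: "T + N < 1" using small TW unfolding N_def by simp
  have N0: "N > 0" unfolding N_def using y x W0 by simp
  have ND: "N \<le> D" unfolding N_def D_def using x by simp
  have Rt_pos: "Rt l > 0" if "l \<ge> 0" for l
  proof -
    have "(\<Sum>\<nu>=l+1..m. t \<nu>) \<le> T" unfolding T_def by (rule sum_nonneg_sub[OF t]) simp
    then show ?thesis unfolding Rt_def using TN N0 by simp
  qed
  have Rt_step: "Rt l - t l = Rt (l - 1)" if "1 \<le> l" "l \<le> m" for l
  proof -
    have "(\<Sum>\<nu>=l..m. t \<nu>) = t l + (\<Sum>\<nu>=Suc l..m. t \<nu>)" using that by (simp add: sum.atLeast_Suc_atMost)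
    then show ?thesis unfolding Rt_def using that by simp
  qed
  have tle: "t l \<le> Rt l" if "1 \<le> l" "l \<le> m" for l
    using Rt_step[OF that] Rt_pos[of "l-1"] by simp
  have part1: "(\<Sum>l=1..m-1. Rt l * Ent q (t l / Rt l)) * ln (real q)
      = (\<Sum>l=1..m-1. ph (t l)) + (\<Sum>l=1..m-1. ph (Rt (l-1)) - ph (Rt l))"
  proof -
    have "(\<Sum>l=1..m-1. Rt l * Ent q (t l / Rt l)) * ln (real q) = (\<Sum>l=1..m-1. Rt l * Ent q (t l / Rt l) * ln (real q))"
      by (simp add: sum_distrib_right)
    also have "\<dots> = (\<Sum>l=1..m-1. ph (t l) + (ph (Rt (l-1)) - ph (Rt l)))"
    proof (rule sum.cong)
      fix l assume l: "l \<in> {1..m-1}"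
      have "Rt l * Ent q (t l / Rt l) * ln (real q) = ph (t l) + ph (Rt l - t l) - ph (Rt l)"
        using Ent_scaled[OF q Rt_pos[of l], of "t l"] t l tle[of l] by auto
      then show "Rt l * Ent q (t l / Rt l) * ln (real q) = ph (t l) + (ph (Rt (l-1)) - ph (Rt l))"
        using Rt_step[of l] l by auto
    qed simp
    finally show ?thesis by (simp add: sum.distrib)
  qed
  have tel: "(\<Sum>l=1..m-1. ph (Rt (l-1)) - ph (Rt l)) = ph (Rt 0) - ph (Rt (m-1))"
    using telescope_ph[of "\<lambda>l. ph (Rt l)" "m-1"] by simp
  have R0: "Rt 0 = 1 - T" unfolding Rt_def T_def by simp
  have Rm: "Rt (m-1) = 1 - t m" unfolding Rt_def using m by simp
  have Em: "Ent q (t m) * ln (real q) = ph (t m) + ph (1 - t m)"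
    using Ent_ln[OF q, of "t m"] t m tle[of m] Rt_def by auto
  have summ: "(\<Sum>l=1..m. ph (t l)) = (\<Sum>l=1..m-1. ph (t l)) + ph (t m)"
  proof -
    obtain k where k: "m = Suc k" using m by (cases m) auto
    show ?thesis unfolding k by (simp add: sum.cl_ivl_Suc)
  qed
  have part2: "(1 - T) * Ent q (N / (1 - T)) * ln (real q) = ph N + ph (1 - T - N) - ph (1 - T)"
    using Ent_scaled[OF q, of "1 - T" N] TN N0 by auto
  have D0: "D > 0" using N0 ND by simp
  have part3: "D * Ent q (N / D) * ln (real q) = ph N + ph (D - N) - ph D"
    using Ent_scaled[OF q D0, of N] N0 ND by auto
  have DN: "D - N = \<sigma>/\<gamma> - x" unfolding D_def N_def by simp
  have regN: "N / D \<ge> 1 - 1 / real q" using reg unfolding N_def D_def W_def .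
  have "Sfun q \<gamma> m \<sigma> y x t = Ent q (t m) + (\<Sum>l=1..m-1. Rt l * Ent q (t l / Rt l))
        + (1 - T) * Ent q (N / (1 - T)) + D * Ent q (N / D)"
    unfolding Sfun_def Let_def Rt_def T_def W_def D_def N_def using reg by simp
  then have "Sfun q \<gamma> m \<sigma> y x t * ln (real q) = (Ent q (t m) + (\<Sum>l=1..m-1. Rt l * Ent q (t l / Rt l))
        + (1 - T) * Ent q (N / (1 - T)) + D * Ent q (N / D)) * ln (real q)" by simp
  also have "\<dots> = Ent q (t m) * ln (real q) + (\<Sum>l=1..m-1. Rt l * Ent q (t l / Rt l)) * ln (real q)
        + (1 - T) * Ent q (N / (1 - T)) * ln (real q) + D * Ent q (N / D) * ln (real q)"
    by (simp only: distrib_right)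
  also have "\<dots> = (\<Sum>l=1..m. ph (t l)) + ph N + ph (1 - T - N) + (ph N + ph (D - N) - ph D)"
    unfolding Em part1 tel part2 part3 summ R0 Rm by simp
  finally show ?thesis unfolding DN by (simp add: N_def D_def T_def W_def)
qed




definition Rs :: "nat \<Rightarrow> (nat \<Rightarrow> real) \<Rightarrow> nat \<Rightarrow> real" where
  "Rs m xs j = (\<Sum>\<nu>=j..m. xs \<nu>)"

definition cc :: "nat \<Rightarrow> (nat \<Rightarrow> real) \<Rightarrow> real" where
  "cc m xs = 2 * (tbar m xs 1 - tstar m xs 1)"

lemma sum_1_5: fixes f :: "nat \<Rightarrow> real" shows "(\<Sum>l=1..5. f l) = f 1 + f 2 + f 3 + f 4 + (f 5::real)"
  by (simp add: numeral_eq_Suc sum.atLeast_Suc_atMost)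
lemma sum_1_3: fixes f :: "nat \<Rightarrow> real" shows "(\<Sum>l=1..3. f l) = f 1 + f 2 + (f 3::real)"
  by (simp add: numeral_eq_Suc sum.atLeast_Suc_atMost)

locale xsl =
  fixes m :: nat and xs :: "nat \<Rightarrow> real"
  assumes m1: "m \<ge> 1" and xs0: "\<forall>l\<in>{1..m}. xs l \<ge> 0"
begin

lemma Rs_step: "1 \<le> j \<Longrightarrow> j \<le> m \<Longrightarrow> Rs m xs j = xs j + Rs m xs (j+1)"
  unfolding Rs_def by (simp add: sum.atLeast_Suc_atMost)

lemma Rs_big: "j > m \<Longrightarrow> Rs m xs j = 0"
  unfolding Rs_def by simp

lemma Rs_nonneg: "1 \<le> j \<Longrightarrow> Rs m xs j \<ge> 0"
  unfolding Rs_def using xs0 by (intro sum_nonneg) auto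

lemma Rs_mono: "1 \<le> i \<Longrightarrow> i \<le> j \<Longrightarrow> Rs m xs j \<le> Rs m xs i"
  unfolding Rs_def by (rule sum_mono2) (use xs0 in auto)

lemma tbar_Rs: "tbar m xs l = 2 * xs l + Rs m xs (l+1)"
  unfolding tbar_def Rs_def by simp

lemma tbar_nonneg: "1 \<le> l \<Longrightarrow> l \<le> m \<Longrightarrow> tbar m xs l \<ge> 0"
  using tbar_Rs[of l] Rs_nonneg[of "l+1"] xs0 by auto

lemma xs_le_Rs: "1 \<le> j \<Longrightarrow> j \<le> m \<Longrightarrow> xs j \<le> Rs m xs j"
  using Rs_step[of j] Rs_nonneg[of "j+1"] by simp

lemma tbar_half: "1 \<le> i \<Longrightarrow> i < j \<Longrightarrow> j \<le> m \<Longrightarrow> tbar m xs j \<le> 2 * tbar m xs i"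
proof -
  assume a: "1 \<le> i" "i < j" "j \<le> m"
  have "tbar m xs j = xs j + Rs m xs j" using tbar_Rs[of j] Rs_step[of j] a by simp
  also have "\<dots> \<le> 2 * Rs m xs j" using xs_le_Rs[of j] a by simp
  also have "\<dots> \<le> 2 * Rs m xs (i+1)" using Rs_mono[of "i+1" j] a by simp
  also have "\<dots> \<le> 2 * tbar m xs i" using tbar_Rs[of i] xs0 a by simp
  finally show ?thesis .
qed

lemma c_rel: "k \<ge> 1 \<Longrightarrow> real (k+1) * (tbar m xs k - tstar m xs k) = cc m xs"
proof (induct k rule: nat_induct_at_least)
  case base then show ?case by (simp add: cc_def)
next
  case (Suc n)
  obtain j where j: "n = Suc j" using Suc by (cases n) auto
  define A where "A = tstar m xs (Suc j)"
  define B where "B = tbar m xs (Suc j)"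
  have e: "tstar m xs (Suc n) = tbar m xs (Suc n) + (real (j + 2) * A - real (j + 2) * B) / real (j + 3)"
    unfolding j A_def B_def by (simp add: numeral_eq_Suc)
  have "real (j+3) * (tbar m xs (Suc n) - tstar m xs (Suc n)) = real (j+3) * (- ((real (j + 2) * A - real (j + 2) * B) / real (j + 3)))"
    unfolding e by simp
  also have "\<dots> = real (j+2) * (B - A)" by (simp add: field_simps)
  finally have f: "real (j+3) * (tbar m xs (Suc n) - tstar m xs (Suc n)) = real (j+2) * (B - A)" .
  have BA: "B - A = tbar m xs n - tstar m xs n" unfolding A_def B_def j by simp
  have IH: "real (n+1) * (tbar m xs n - tstar m xs n) = cc m xs" using Suc.hyps by blast
  have nj: "real (n+1) = real (j+2)" using j by simp
  have g: "real (j+3) * (tbar m xs (Suc n) - tstar m xs (Suc n)) = cc m xs"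
    using f unfolding BA IH[symmetric] nj .
  have h: "Suc n + 1 = j + 3" using j by simp
  show ?case unfolding h using g .
qed

lemma split1: "(\<Sum>l=1..m. f l) = f 1 + (\<Sum>l=2..m. (f l :: real))"
  using m1 by (simp add: sum.atLeast_Suc_atMost numeral_2_eq_2)

lemma c_formula: "cc m xs = (\<Sum>l=1..m. real (l+1) * Rs m xs (l+1))"
proof -
  have t1: "2 * tstar m xs 1 = 2 * (\<Sum>l=1..m. real (l + 1) * xs l) - (\<Sum>l=2..m. real (l + 1) * tbar m xs l)"
    by simp
  have "(\<Sum>l=1..m. real (l+1) * Rs m xs (l+1)) = (\<Sum>l=1..m. real (l+1) * tbar m xs l) - 2 * (\<Sum>l=1..m. real (l + 1) * xs l)"
    by (simp add: tbar_Rs sum_distrib_left sum_subtractf[symmetric] algebra_simps)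
  also have "\<dots> = cc m xs"
    unfolding cc_def split1[of "\<lambda>l. real (l+1) * tbar m xs l"] using t1 by (simp add: field_simps)
  finally show ?thesis by simp
qed

lemma c_nonneg: "cc m xs \<ge> 0"
  unfolding c_formula using Rs_nonneg by (intro sum_nonneg) auto

lemma tstar_le: "k \<ge> 1 \<Longrightarrow> tstar m xs k \<le> tbar m xs k"
proof -
  assume k: "k \<ge> 1"
  have "real (k+1) * (tbar m xs k - tstar m xs k) \<ge> 0" using c_rel[OF k] c_nonneg by simp
  then have "tbar m xs k - tstar m xs k \<ge> 0" by (simp add: zero_le_mult_iff)
  then show ?thesis by simp
qed

lemma c_ge6: "m \<ge> 6 \<Longrightarrow> cc m xs \<ge> 6 * tbar m xs 5"
proof -
  assume m6: "m \<ge> 6"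
  have "(\<Sum>l=1..5. real (l+1) * Rs m xs (l+1)) \<le> (\<Sum>l=1..m. real (l+1) * Rs m xs (l+1))"
    by (rule sum_mono2) (use m6 Rs_nonneg in auto)
  moreover have "Rs m xs 2 \<ge> Rs m xs 5" "Rs m xs 3 \<ge> Rs m xs 5" "Rs m xs 4 \<ge> Rs m xs 5"
    using Rs_mono by auto
  moreover have "Rs m xs 5 = xs 5 + Rs m xs 6" using Rs_step[of 5] m6 by simp
  moreover have "xs 5 \<ge> 0" "Rs m xs 6 \<ge> 0" using xs0 m6 Rs_nonneg[of 6] by auto
  moreover have "tbar m xs 5 = 2 * xs 5 + Rs m xs 6" using tbar_Rs[of 5] by simp
  moreover have "(\<Sum>l=1..5. real (l+1) * Rs m xs (l+1)) = 2 * Rs m xs 2 + 3 * Rs m xs 3 + 4 * Rs m xs 4 + 5 * Rs m xs 5 + 6 * Rs m xs 6"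
    unfolding sum_1_5 by (simp add: numeral_eq_Suc)
  ultimately show ?thesis unfolding c_formula by linarith
qed

lemma sumP: "2 * tstar m xs 1 + (\<Sum>l=2..m. real (l+1) * tbar m xs l) = 2 * (\<Sum>l=1..m. real (l + 1) * xs l)"
  by (simp add: field_simps)

lemma u_nonneg: "ustar m xs \<ge> 0"
proof -
  have "2 * ustar m xs = 2 * (\<Sum>l=1..m. real (l + 1) * xs l) - (\<Sum>l=2..m. real (l+1) * tbar m xs l)
      + (\<Sum>l=2..m. 2 * real l * tbar m xs l)"
    unfolding ustar_def using sumP by (simp add: sum_distrib_left algebra_simps)
  also have "(\<Sum>l=2..m. 2 * real l * tbar m xs l) = (\<Sum>l=2..m. real (l+1) * tbar m xs l) + (\<Sum>l=2..m. (real l - 1) * tbar m xs l)"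
    unfolding sum.distrib[symmetric] by (rule sum.cong) (auto simp: algebra_simps)
  also have "2 * (\<Sum>l=1..m. real (l + 1) * xs l) - (\<Sum>l=2..m. real (l+1) * tbar m xs l) + ((\<Sum>l=2..m. real (l+1) * tbar m xs l) + (\<Sum>l=2..m. (real l - 1) * tbar m xs l))
     = 2 * (\<Sum>l=1..m. real (l + 1) * xs l) + (\<Sum>l=2..m. (real l - 1) * tbar m xs l)"
    by simp
  also have "\<dots> \<ge> 0"
    using xs0 tbar_nonneg by (intro add_nonneg_nonneg mult_nonneg_nonneg sum_nonneg) auto
  finally show ?thesis by simp
qed

lemma u_ge_t1: "tstar m xs 1 \<le> ustar m xs"
proof -
  have "0 \<le> (\<Sum>l=2..m. real l * tbar m xs l)" using tbar_nonneg by (intro sum_nonneg mult_nonneg_nonneg) auto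
  then show ?thesis unfolding ustar_def by simp
qed

lemma u_ge_tbar: "tstar m xs 1 \<ge> 0 \<Longrightarrow> 2 \<le> j \<Longrightarrow> j \<le> m \<Longrightarrow> tbar m xs j \<le> ustar m xs"
proof -
  assume a: "tstar m xs 1 \<ge> 0" "2 \<le> j" "j \<le> m"
  have "real j * tbar m xs j \<le> (\<Sum>l=2..m. real l * tbar m xs l)"
    using a tbar_nonneg by (intro member_le_sum) auto
  moreover have "tbar m xs j \<le> real j * tbar m xs j" using a tbar_nonneg[of j]
    mult_right_mono[of 1 "real j" "tbar m xs j"] by auto
  ultimately show ?thesis unfolding ustar_def using a by linarith
qed

end



declare tstar.simps[simp del]

lemma sum13g: fixes g :: "nat \<Rightarrow> real" shows "(\<Sum>l=1..3. real(l+1) * g (l+1)) = 2*g 2 + 3*g 3 + 4*g 4"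
  by (simp add: numeral_eq_Suc sum.atLeast_Suc_atMost)
lemma sum15g: fixes g :: "nat \<Rightarrow> real" shows "(\<Sum>l=1..5. real(l+1) * g (l+1)) = 2*g 2 + 3*g 3 + 4*g 4 + 5*g 5 + 6*g 6"
  by (simp add: numeral_eq_Suc sum.atLeast_Suc_atMost)

lemma odd_pow_nonpos: "odd n \<Longrightarrow> (t::real) \<le> 0 \<Longrightarrow> t ^ n \<le> 0"
  using zero_le_odd_power[of n t] odd_pos[of n] by (cases "t = 0") (auto simp: le_less)

lemma odd_pow_neg: "odd n \<Longrightarrow> (t::real) < 0 \<Longrightarrow> t ^ n < 0"
  using zero_le_odd_power[of n t] by auto

lemma pow_cancel:
  fixes tb ts D :: real
  assumes "tb ^ (j+1) * D \<le> ts ^ (j+2)" "0 < ts" "ts \<le> D" "0 \<le> tb"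
  shows "tb \<le> ts"
proof -
  have "ts ^ (j+2) = ts ^ (j+1) * ts" by simp
  also have "\<dots> \<le> ts ^ (j+1) * D" using assms by (intro mult_left_mono) auto
  finally have "tb ^ (j+1) * D \<le> ts ^ (j+1) * D" using assms(1) by linarith
  then have "tb ^ Suc j \<le> ts ^ Suc j" using assms by (simp add: mult_le_cancel_right)
  then show ?thesis using assms power_le_imp_le_base[of tb j ts] by auto
qed

lemma chain_alg:
  fixes L a a' b d :: real
  assumes L: "L \<ge> 1" and A: "(L+1)*a' + d \<le> (L+2)*a" and B: "2*a + (L-1)*d \<le> (L+1)*b"
  shows "2*a' + L*d \<le> (L+2)*b"
proof -
  have "(L+2)*(2*a + (L-1)*d) \<le> (L+2)*((L+1)*b)" using B L by (intro mult_left_mono) auto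
  moreover have "(L+1)*(2*a' + L*d) = 2*((L+1)*a' + d) + (L+2)*((L-1)*d) - 2*d + 2*d - 0"
    by (simp add: algebra_simps)
  ultimately have "(L+1)*(2*a' + L*d) \<le> (L+1)*((L+2)*b)"
    using A by (simp add: algebra_simps)
  then show ?thesis using L by (simp add: mult_le_cancel_left_pos)
qed

lemma (in xsl) t1_nonneg_gen:
  assumes D0: "D > 0" and C4: "\<forall>l\<in>{1..m-1}. (tbar m xs (l + 1)) ^ (l + 1) * D \<le> (tstar m xs l) ^ (l + 2)"
  shows "tstar m xs 1 \<ge> 0"
proof (cases "m = 1")
  case True
  then show ?thesis using xs0 by (simp add: tstar.simps)
next
  case False
  then have "1 \<in> {1..m-1}" using m1 by simp
  from bspec[OF C4 this] have "(tbar m xs 2) ^ 2 * D \<le> (tstar m xs 1) ^ 3" by (simp add: numeral_eq_Suc)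
  moreover have "(tbar m xs 2) ^ 2 * D \<ge> 0" using D0 by simp
  ultimately have "(tstar m xs 1) ^ 3 \<ge> 0" by linarith
  then show ?thesis using zero_le_odd_power[of 3 "tstar m xs 1"] by simp
qed

locale Dl = xsl +
  fixes D :: real
  assumes D0: "D > 0" and Dt1: "tstar m xs 1 \<le> D"
    and Dtb: "\<forall>j\<in>{2..m}. tbar m xs j \<le> D"
    and C4: "\<forall>l\<in>{1..m-1}. (tbar m xs (l + 1)) ^ (l + 1) * D \<le> (tstar m xs l) ^ (l + 2)"
begin

lemma t1_nonneg: "tstar m xs 1 \<ge> 0" using t1_nonneg_gen[OF D0 C4] .

lemma ts_le_D: "1 \<le> j \<Longrightarrow> j \<le> m \<Longrightarrow> tstar m xs j \<le> D"
proof -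
  assume j: "1 \<le> j" "j \<le> m"
  show ?thesis
  proof (cases "j = 1")
    case True then show ?thesis using Dt1 by simp
  next
    case False
    then have "j \<in> {2..m}" using j by auto
    then show ?thesis using tstar_le[of j] Dtb j by force
  qed
qed

lemma lemA: "1 \<le> k \<Longrightarrow> k \<le> m - 1 \<Longrightarrow> tbar m xs (k+1) > 0 \<Longrightarrow> tstar m xs k > 0"
proof (induct k rule: less_induct)
  case (less k)
  have tpos: "tbar m xs (j+1) > 0" if "1 \<le> j" "j < k" for j
  proof -
    have km: "k + 1 \<le> m" using less.prems m1 by linarith
    have "tbar m xs (k+1) \<le> 2 * tbar m xs (j+1)" using tbar_half[of "j+1" "k+1"] that km by simp
    then show ?thesis using less.prems(3) by linarith
  qed
  have spos: "tstar m xs j > 0" if "1 \<le> j" "j < k" for j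
    using less.hyps[of j] tpos[of j] that less.prems by simp
  have sge: "tbar m xs (j+1) \<le> tstar m xs j" if "1 \<le> j" "j < k" for j
  proof (rule pow_cancel)
    show "tbar m xs (j + 1) ^ (j + 1) * D \<le> tstar m xs j ^ (j + 2)" using C4 that less.prems by simp
    show "0 < tstar m xs j" using spos that .
    show "tstar m xs j \<le> D" using ts_le_D[of j] that less.prems by simp
    show "0 \<le> tbar m xs (j+1)" using tbar_nonneg[of "j+1"] that less.prems by simp
  qed
  have cle: "cc m xs \<le> real (j+1) * (tbar m xs j - tbar m xs (j+1))" if "1 \<le> j" "j < k" for j
  proof -
    have "real (j+1) * (tbar m xs j - tstar m xs j) = cc m xs" using c_rel[of j] that by simp
    moreover have "real (j+1) * (tbar m xs j - tstar m xs j) \<le> real (j+1) * (tbar m xs j - tbar m xs (j+1))"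
      using sge[OF that] by (intro mult_left_mono) auto
    ultimately show ?thesis by simp
  qed
  show ?case
  proof (rule ccontr)
    assume "\<not> tstar m xs k > 0"
    then have sk: "tstar m xs k \<le> 0" by simp
    have C4k: "tbar m xs (k+1) ^ (k+1) * D \<le> tstar m xs k ^ (k+2)" using C4 less.prems by simp
    have lhs: "tbar m xs (k+1) ^ (k+1) * D > 0" using less.prems D0 by simp
    have ev: "even k"
    proof (rule ccontr)
      assume "odd k"
      then have "odd (k+2)" by simp
      from odd_pow_nonpos[OF this sk] have "tstar m xs k ^ (k+2) \<le> 0" .
      then show False using C4k lhs by linarith
    qed
    have skn: "tstar m xs k < 0"
    proof -
      have "tstar m xs k \<noteq> 0" using C4k lhs by (cases "tstar m xs k = 0") auto
      then show ?thesis using sk by simp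
    qed
    have big: "tbar m xs (k+1) \<le> - tstar m xs k"
    proof (rule ccontr)
      assume "\<not> ?thesis"
      then have lt: "- tstar m xs k < tbar m xs (k+1)" by simp
      have "tstar m xs k ^ (k+2) = (- tstar m xs k) ^ (k+2)" using ev by simp
      also have "\<dots> < tbar m xs (k+1) ^ (k+2)" using lt skn by (intro power_strict_mono) auto
      also have "\<dots> = tbar m xs (k+1) ^ (k+1) * tbar m xs (k+1)" by simp
      also have "\<dots> \<le> tbar m xs (k+1) ^ (k+1) * D"
        using Dtb less.prems by (intro mult_left_mono) auto
      finally show False using C4k by linarith
    qed
    have cge: "cc m xs \<ge> real (k+1) * (tbar m xs k + tbar m xs (k+1))"
    proof -
      have "real (k+1) * (tbar m xs k - tstar m xs k) = cc m xs" using c_rel[of k] less.prems by simp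
      moreover have "real (k+1) * (tbar m xs k + tbar m xs (k+1)) \<le> real (k+1) * (tbar m xs k - tstar m xs k)"
        using big by (intro mult_left_mono) auto
      ultimately show ?thesis by simp
    qed
    have k2: "k \<ge> 2" using ev less.prems(1) by presburger
    show False
    proof (cases "k \<ge> 6")
      case True
      have "cc m xs \<ge> 6 * tbar m xs 5" using c_ge6 True less.prems by simp
      moreover have "cc m xs \<le> 6 * (tbar m xs 5 - tbar m xs 6)" using cle[of 5] True by simp
      moreover have "tbar m xs 6 > 0" using tpos[of 5] True by simp
      ultimately show False by simp
    next
      case False
      then have k24: "k = 2 \<or> k = 4" using ev k2 by presburger
      show False
      proof (cases "k + 1 \<le> m - 1")
        case True
        have hf: "tbar m xs (k+1) \<le> 2 * tbar m xs k" using tbar_half[of k "k+1"] less.prems by simp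
        have cr: "real (k+2) * (tbar m xs (k+1) - tstar m xs (k+1)) = cc m xs" using c_rel[of "k+1"] by simp
        have neg: "tstar m xs (k+1) < 0" using k24 cr cge hf less.prems by auto
        have "odd (k+3)" using ev by simp
        then have "tstar m xs (k+1) ^ (k+3) < 0" using odd_pow_neg neg by blast
        moreover have "tbar m xs (k+2) ^ (k+2) * D \<le> tstar m xs (k+1) ^ (k+3)"
        proof -
          have "k+1 \<in> {1..m-1}" using True by simp
          from bspec[OF C4 this] have h: "tbar m xs (k+1+1) ^ (k+1+1) * D \<le> tstar m xs (k+1) ^ (k+1+2)" .
          have e1: "k+1+1 = k+2" and e2: "k+1+2 = k+3" by simp_all
          show ?thesis using h unfolding e1 e2 .
        qed
        moreover have "tbar m xs (k+2) ^ (k+2) * D \<ge> 0" using tbar_nonneg[of "k+2"] True D0 by simp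
        ultimately show False by linarith
      next
        case False
        then have mk: "m = k + 1" using less.prems by simp
        show False
        proof (cases "k = 2")
          case True
          then have m3: "m = 3" using mk by simp
          have c3: "cc m xs = 2 * Rs m xs 2 + 3 * Rs m xs 3 + 4 * Rs m xs 4"
          proof -
            have "{1..m} = {1..3::nat}" using m3 by simp
            then show ?thesis using c_formula sum13g[of "Rs m xs"] by simp
          qed
          have "Rs m xs 4 = 0" using Rs_big m3 by simp
          moreover have "Rs m xs 3 = xs 3 + Rs m xs 4" using Rs_step[of 3] m3 by simp
          moreover have "Rs m xs 2 = xs 2 + Rs m xs 3" using Rs_step[of 2] m3 by simp
          moreover have "tbar m xs 2 = 2 * xs 2 + Rs m xs 3" "tbar m xs 3 = 2 * xs 3 + Rs m xs 4"
            using tbar_Rs by auto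
          moreover have "xs 2 \<ge> 0" "xs 3 \<ge> 0" using xs0 m3 by auto
          ultimately show False using cge c3 less.prems True by simp
        next
          case False
          then have k4: "k = 4" and m5: "m = 5" using k24 mk by auto
          have c5: "cc m xs = 2 * Rs m xs 2 + 3 * Rs m xs 3 + 4 * Rs m xs 4 + 5 * Rs m xs 5 + 6 * Rs m xs 6"
          proof -
            have "{1..m} = {1..5::nat}" using m5 by simp
            then show ?thesis using c_formula sum15g[of "Rs m xs"] by simp
          qed
          have "Rs m xs 6 = 0" using Rs_big m5 by simp
          moreover have "Rs m xs 5 = xs 5 + Rs m xs 6" using Rs_step[of 5] m5 by simp
          moreover have "Rs m xs 4 = xs 4 + Rs m xs 5" using Rs_step[of 4] m5 by simp
          moreover have "Rs m xs 3 = xs 3 + Rs m xs 4" using Rs_step[of 3] m5 by simp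
          moreover have "Rs m xs 2 = xs 2 + Rs m xs 3" using Rs_step[of 2] m5 by simp
          moreover have "tbar m xs 2 = 2 * xs 2 + Rs m xs 3" "tbar m xs 3 = 2 * xs 3 + Rs m xs 4"
             "tbar m xs 4 = 2 * xs 4 + Rs m xs 5" "tbar m xs 5 = 2 * xs 5 + Rs m xs 6"
            using tbar_Rs by auto
          moreover have "xs 2 \<ge> 0" "xs 3 \<ge> 0" "xs 4 \<ge> 0" "xs 5 \<ge> 0" using xs0 m5 by auto
          moreover have "cc m xs \<le> 3 * (tbar m xs 2 - tbar m xs 3)" using cle[of 2] k4 by simp
          moreover have "cc m xs \<le> 4 * (tbar m xs 3 - tbar m xs 4)" using cle[of 3] k4 by simp
          moreover have "cc m xs \<ge> 5 * (tbar m xs 4 + tbar m xs 5)" using cge k4 by simp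
          moreover have "tbar m xs 5 > 0" using less.prems k4 by simp
          ultimately show False using c5 by simp
        qed
      qed
    qed
  qed
qed

end



context Dl begin

lemma chainQ:
  assumes t1p: "tstar m xs 1 > 0"
  shows "2 \<le> l \<Longrightarrow> l \<le> m \<Longrightarrow> tbar m xs l > 0 \<Longrightarrow>
    2 * ln (tbar m xs l) + real (l-1) * ln D \<le> real (l+1) * ln (tstar m xs 1)"
proof (induct l rule: nat_induct_at_least)
  case base
  have "1 \<in> {1..m-1}" using base by simp
  from bspec[OF C4 this] have h: "(tbar m xs 2) ^ 2 * D \<le> (tstar m xs 1) ^ 3" by (simp add: numeral_eq_Suc)
  have p: "(tbar m xs 2) ^ 2 * D > 0" using base D0 by simp
  have "ln ((tbar m xs 2) ^ 2 * D) \<le> ln ((tstar m xs 1) ^ 3)" using h p t1p by (subst ln_le_cancel_iff) auto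
  moreover have "ln ((tbar m xs 2) ^ 2 * D) = 2 * ln (tbar m xs 2) + ln D"
    using base D0 by (simp add: ln_mult ln_realpow)
  moreover have "ln ((tstar m xs 1) ^ 3) = 3 * ln (tstar m xs 1)" using ln_realpow[of "tstar m xs 1" 3] by simp
  ultimately show ?case by simp
next
  case (Suc n)
  have n2: "2 \<le> n" and nm: "Suc n \<le> m" and tp: "tbar m xs (Suc n) > 0" using Suc by auto
  have tbn: "tbar m xs n > 0" using tbar_half[of n "Suc n"] n2 nm tp by simp
  have IH: "2 * ln (tbar m xs n) + real (n-1) * ln D \<le> real (n+1) * ln (tstar m xs 1)"
    using Suc.hyps(2) nm tbn by simp
  have tsn: "tstar m xs n > 0" using lemA[of n] n2 nm tp by simp
  have "n \<in> {1..m-1}" using n2 nm by simp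
  from bspec[OF C4 this] have h: "tbar m xs (n+1) ^ (n+1) * D \<le> tstar m xs n ^ (n+2)" .
  have p: "tbar m xs (n+1) ^ (n+1) * D > 0" using tp D0 by simp
  have "ln (tbar m xs (n+1) ^ (n+1) * D) \<le> ln (tstar m xs n ^ (n+2))" using h p tsn by (subst ln_le_cancel_iff) auto
  moreover have "ln (tbar m xs (n+1) ^ (n+1) * D) = real (n+1) * ln (tbar m xs (n+1)) + ln D"
    using tp D0 by (simp add: ln_mult ln_realpow algebra_simps)
  moreover have "ln (tstar m xs n ^ (n+2)) = real (n+2) * ln (tstar m xs n)" by (rule ln_realpow)
  moreover have "ln (tstar m xs n) \<le> ln (tbar m xs n)" using tstar_le[of n] n2 tsn by simp
  ultimately have A0: "real (n+1) * ln (tbar m xs (n+1)) + ln D \<le> real (n+2) * ln (tstar m xs n)"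
    and lnle: "ln (tstar m xs n) \<le> ln (tbar m xs n)" by linarith+
  have "real (n+2) * ln (tstar m xs n) \<le> real (n+2) * ln (tbar m xs n)"
    using lnle by (intro mult_left_mono) auto
  moreover have e1: "real (n+1) = real n + 1" "real (n+2) = real n + 2" by simp_all
  ultimately have A: "(real n + 1) * ln (tbar m xs (n+1)) + ln D \<le> (real n + 2) * ln (tbar m xs n)"
    using A0 unfolding e1 by linarith
  have B: "2 * ln (tbar m xs n) + (real n - 1) * ln D \<le> (real n + 1) * ln (tstar m xs 1)"
    using IH n2 by (simp add: of_nat_diff algebra_simps)
  have "2 * ln (tbar m xs (n+1)) + real n * ln D \<le> (real n + 2) * ln (tstar m xs 1)"
    using chain_alg[OF _ A B] n2 by simp
  then show ?case by (simp add: algebra_simps)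
qed

end

lemma regime:
  fixes q :: nat and y x s W :: real
  assumes q: "real q \<ge> 2" and y: "y > 0" and x: "0 \<le> x" "x \<le> s" and C1: "s \<le> y / (real q - 1)" and W: "W \<ge> 0"
  shows "(y + x + W) / (y + s + W) \<ge> 1 - 1 / real q"
proof -
  have q1: "real q - 1 > 0" using q by simp
  have "(real q - 1) * s \<le> y" using C1 q1 by (simp add: field_simps)
  then have qs: "real q * s \<le> y + s" by (simp add: algebra_simps)
  have D: "y + s + W > 0" using y x W by simp
  have "real q * (s - x) \<le> real q * s" using x q by simp
  also have "\<dots> \<le> y + s + W" using qs W by simp
  finally have "real q * ((y + s + W) - (y + x + W)) \<le> y + s + W" by simp
  then have "(1 - 1 / real q) * (y + s + W) \<le> y + x + W" using q by (simp add: field_simps)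
  then show ?thesis using D by (simp add: le_divide_eq)
qed




context Dl begin
lemma t1_zero:
  assumes t0: "tstar m xs 1 = 0" and l: "l \<in> {1..m}"
  shows "tbar m xs l = 0"
proof -
  have R2: "Rs m xs 2 = 0"
  proof (cases "m = 1")
    case True then show ?thesis using Rs_big by simp
  next
    case False
    then have "1 \<in> {1..m-1}" using m1 by simp
    from bspec[OF C4 this] have "(tbar m xs 2) ^ 2 * D \<le> (tstar m xs 1) ^ 3" by (simp add: numeral_eq_Suc)
    then have "(tbar m xs 2) ^ 2 * D \<le> 0" using t0 by simp
    then have "(tbar m xs 2) ^ 2 \<le> 0" using D0 by (simp add: mult_le_0_iff)
    then have tb2: "tbar m xs 2 = 0" by simp
    have "Rs m xs 2 = xs 2 + Rs m xs 3" using Rs_step[of 2] False m1 by simp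
    moreover have "tbar m xs 2 = 2 * xs 2 + Rs m xs 3" using tbar_Rs[of 2] by simp
    moreover have "xs 2 \<ge> 0" "Rs m xs 3 \<ge> 0" using xs0 False m1 Rs_nonneg[of 3] by auto
    ultimately show ?thesis using tb2 by simp
  qed
  have "cc m xs = 0"
    unfolding c_formula
  proof (rule sum.neutral, rule ballI)
    fix j assume j: "j \<in> {1..m}"
    have "Rs m xs (j+1) \<le> Rs m xs 2" using Rs_mono[of 2 "j+1"] j by simp
    moreover have "Rs m xs (j+1) \<ge> 0" using Rs_nonneg[of "j+1"] by simp
    ultimately show "real (j+1) * Rs m xs (j+1) = 0" using R2 by simp
  qed
  then have tb1: "tbar m xs 1 = 0" using t0 unfolding cc_def by simp
  show ?thesis
  proof (cases "l = 1")
    case True then show ?thesis using tb1 by simp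
  next
    case False
    then have "tbar m xs l \<le> 2 * tbar m xs 1" using tbar_half[of 1 l] l by simp
    moreover have "tbar m xs l \<ge> 0" using tbar_nonneg[of l] l by simp
    ultimately show ?thesis using tb1 by simp
  qed
qed
end

lemma aux_lin: "(A::real) \<le> B \<Longrightarrow> 2*Z = c - d - A \<Longrightarrow> d + B \<le> c \<Longrightarrow> Z \<ge> 0"
  by linarith

theorem proposition5p10:
  fixes q :: nat and \<gamma> \<sigma> y :: real and m :: nat and xs :: "nat \<Rightarrow> real"
  assumes q_pp: "\<exists>p k. prime p \<and> k > 0 \<and> q = p ^ k"
    and \<gamma>_pos: "\<gamma> > 0"
    and m_pos: "m \<ge> 1"
    and y_pos: "y > 0"
    and xs_nonneg: "\<forall>l\<in>{1..m}. xs l \<ge> 0"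
    and \<sigma>_nonneg: "\<sigma> \<ge> 0"
    and small: "y + 2 * (\<Sum>l=1..m. real (l + 1) * xs l) + \<sigma> / \<gamma> < 1"
    and C1: "\<sigma> / \<gamma> \<le> y / (real q - 1)"
    and C2: "\<forall>l\<in>{1..m}. tbar m xs l * (y + \<sigma> / \<gamma> + ustar m xs) ^ (2 * l)
               < (1 - y - \<sigma> / \<gamma> - 2 * (\<Sum>\<nu>=1..m. real (\<nu> + 1) * xs \<nu>)) ^ (l + 1)
                 * (y + \<sigma> / \<gamma>) ^ l"
    and C3: "\<sigma> / \<gamma> * (1 - y) < y ^ 2"
    and C4: "\<forall>l\<in>{1..m-1}. (tbar m xs (l + 1)) ^ (l + 1) * (y + \<sigma> / \<gamma> + ustar m xs)
               \<le> (tstar m xs l) ^ (l + 2)"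
  shows "Ifun q \<gamma> m y xs \<sigma> =
           Sfun q \<gamma> m \<sigma> y 0 (\<lambda>l. if l = 1 then tstar m xs 1 else tbar m xs l)"
proof -
  define s where "s = \<sigma> / \<gamma>"
  have s0: "s \<ge> 0" using \<sigma>_nonneg \<gamma>_pos by (simp add: s_def)
  obtain p k where pk: "prime p" "k > 0" "q = p ^ k" using q_pp by blast
  have "p \<ge> 2" using pk(1) by (simp add: prime_ge_2_nat)
  moreover have "p \<le> p ^ k" using pk(2) \<open>p \<ge> 2\<close> by (simp add: self_le_power)
  ultimately have "q \<ge> 2" using pk(3) by simp
  then have q2: "real q \<ge> 2" by simp
  have lq: "ln (real q) > 0" using q2 by simp
  interpret X: xsl m xs using m_pos xs_nonneg by unfold_locales auto
  define u where "u = ustar m xs"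
  define t1 where "t1 = tstar m xs 1"
  define Dst where "Dst = y + s + u"
  define Nst where "Nst = y + u"
  define P where "P = 2 * (\<Sum>l=1..m. real (l+1) * xs l)"
  define Mst where "Mst = 1 - y - P"
  have u0: "u \<ge> 0" using X.u_nonneg unfolding u_def .
  have Dst0: "Dst > 0" using u0 s0 y_pos unfolding Dst_def by simp
  have C4': "\<forall>l\<in>{1..m-1}. tbar m xs (l+1)^(l+1) * Dst \<le> tstar m xs l^(l+2)"
    using C4 unfolding Dst_def u_def s_def .
  have t10: "t1 \<ge> 0" using X.t1_nonneg_gen[OF Dst0 C4'] unfolding t1_def .
  interpret Y: Dl m xs Dst
  proof unfold_locales
    show "0 < Dst" by (rule Dst0)
    show "tstar m xs 1 \<le> Dst" using X.u_ge_t1 s0 y_pos unfolding Dst_def u_def by simp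
    show "\<forall>j\<in>{2..m}. tbar m xs j \<le> Dst"
      using X.u_ge_tbar t10 s0 y_pos unfolding Dst_def u_def t1_def by force
    show "\<forall>l\<in>{1..m-1}. tbar m xs (l+1)^(l+1) * Dst \<le> tstar m xs l^(l+2)" by (rule C4')
  qed
  define tst where "tst = (\<lambda>l. if l = 1 then t1 else tbar m xs l)"
  have tst_eq: "(\<lambda>l. if l = 1 then tstar m xs 1 else tbar m xs l) = tst"
    unfolding tst_def t1_def ..
  have sP: "(\<Sum>l=1..m. real (l+1) * tst l) = P"
  proof -
    have "(\<Sum>l=1..m. real (l+1) * tst l) = 2 * t1 + (\<Sum>l=2..m. real (l+1) * tst l)"
      using X.split1[of "\<lambda>l. real (l+1) * tst l"] unfolding tst_def by simp
    also have "(\<Sum>l=2..m. real (l+1) * tst l) = (\<Sum>l=2..m. real (l+1) * tbar m xs l)"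
      unfolding tst_def by (rule sum.cong) auto
    finally show ?thesis using X.sumP unfolding P_def t1_def by simp
  qed
  have sW: "(\<Sum>l=1..m. real l * tst l) = u"
  proof -
    have "(\<Sum>l=1..m. real l * tst l) = t1 + (\<Sum>l=2..m. real l * tst l)"
      using X.split1[of "\<lambda>l. real l * tst l"] unfolding tst_def by simp
    also have "(\<Sum>l=2..m. real l * tst l) = (\<Sum>l=2..m. real l * tbar m xs l)"
      unfolding tst_def by (rule sum.cong) auto
    finally show ?thesis unfolding u_def ustar_def t1_def by simp
  qed
  have tst_bd: "0 \<le> tst l \<and> tst l \<le> tbar m xs l" if "l \<in> {1..m}" for l
    using that t10 X.tstar_le[of 1] X.tbar_nonneg[of l] unfolding tst_def t1_def by auto
  have feas0: "feasible \<gamma> m \<sigma> xs 0 tst"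
    unfolding feasible_def using tst_bd s0 sP unfolding s_def tbar_def P_def by auto
  have key: "Sfun q \<gamma> m \<sigma> y x t \<le> Sfun q \<gamma> m \<sigma> y 0 tst" if fe: "feasible \<gamma> m \<sigma> xs x t" for x t
  proof -
    have x0: "0 \<le> x" and xs': "x \<le> s" and tb: "\<forall>l\<in>{1..m}. 0 \<le> t l \<and> t l \<le> tbar m xs l"
      and sumc: "(\<Sum>l=1..m. real (l+1) * t l) \<le> P"
      using fe unfolding feasible_def s_def tbar_def P_def by auto
    have tnn: "\<forall>l\<in>{1..m}. t l \<ge> 0" using tb by auto
    define W where "W = (\<Sum>l=1..m. real l * t l)"
    define T where "T = (\<Sum>l=1..m. t l)"
    define N where "N = y + x + W"
    define D where "D = y + s + W"
    define M where "M = 1 - T - N"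
    define Tst where "Tst = (\<Sum>l=1..m. tst l)"
    have W0: "W \<ge> 0" unfolding W_def using tnn by (intro sum_nonneg) auto
    have TW: "T + W = (\<Sum>l=1..m. real (l+1) * t l)"
      unfolding T_def W_def by (simp add: sum.distrib[symmetric] algebra_simps)
    have TWst: "Tst + u = P"
      unfolding Tst_def sW[symmetric] sP[symmetric] by (simp add: sum.distrib[symmetric] algebra_simps)
    have sm: "y + P + s < 1" using small unfolding P_def s_def by simp
    have small': "y + x + (\<Sum>l=1..m. real (l+1) * t l) < 1" using sm sumc xs' by simp
    have smallst: "y + 0 + (\<Sum>l=1..m. real (l+1) * tst l) < 1" using sm sP s0 by simp
    have C1': "s \<le> y / (real q - 1)" using C1 unfolding s_def .
    have reg: "(y + x + W) / (y + s + W) \<ge> 1 - 1 / real q"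
      using regime[OF q2 y_pos x0 xs' C1' W0] .
    have regst: "(y + 0 + u) / (y + s + u) \<ge> 1 - 1 / real q"
      using regime[OF q2 y_pos _ s0 C1' u0] by simp
    have tstnn: "\<forall>l\<in>{1..m}. tst l \<ge> 0" using tst_bd by auto
    have dec1: "Sfun q \<gamma> m \<sigma> y x t * ln (real q) = (\<Sum>l=1..m. ph (t l)) + ph N + ph M + (ph N + ph (s - x) - ph D)"
      using Sfun_decomp[OF q2 m_pos tnn y_pos x0 xs'[unfolded s_def] small' reg[unfolded s_def W_def]]
      unfolding M_def N_def D_def W_def T_def s_def by simp
    have dec2: "Sfun q \<gamma> m \<sigma> y 0 tst * ln (real q) = (\<Sum>l=1..m. ph (tst l)) + ph Nst + ph Mst + (ph Nst + ph s - ph Dst)"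
    proof -
      have "Sfun q \<gamma> m \<sigma> y 0 tst * ln (real q) = (\<Sum>l=1..m. ph (tst l)) + ph (y + 0 + u)
        + ph (1 - Tst - (y + 0 + u)) + (ph (y + 0 + u) + ph (s - 0) - ph (y + s + u))"
        using Sfun_decomp[OF q2 m_pos tstnn y_pos _ s0[unfolded s_def] smallst regst[unfolded s_def sW[symmetric]]]
        unfolding sW Tst_def s_def by simp
      moreover have "1 - Tst - (y + 0 + u) = Mst" using TWst unfolding Mst_def by simp
      ultimately show ?thesis unfolding Nst_def Dst_def by simp
    qed
    have Nst0: "Nst > 0" using y_pos u0 unfolding Nst_def by simp
    have NDst: "Nst \<le> Dst" using s0 unfolding Nst_def Dst_def by simp
    have Mst0: "Mst > s" using sm unfolding Mst_def by simp
    have M0: "M > 0" using small' TW unfolding M_def N_def by simp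
    have N0: "N > 0" using y_pos x0 W0 unfolding N_def by simp
    define \<alpha> where "\<alpha> = Nst / Dst"
    have a0: "0 < \<alpha>" "\<alpha> \<le> 1" using Nst0 NDst Dst0 unfolding \<alpha>_def by auto
    have a1: "D = N" if "\<alpha> = 1"
    proof -
      have "Nst = Dst" using that Dst0 unfolding \<alpha>_def by simp
      then have "s = 0" unfolding Nst_def Dst_def by simp
      then show ?thesis using x0 xs' unfolding D_def N_def by simp
    qed
    have posor: "tst l > 0 \<or> t l = tst l" if l: "l \<in> {1..m}" for l
    proof (cases "tbar m xs l = 0")
      case True
      have "t l = 0" using tb l True by force
      moreover have "tst l = 0" using tst_bd[OF l] True by simp
      ultimately show ?thesis by simp
    next
      case False
      show ?thesis
      proof (cases "l = 1")
        case True
        show ?thesis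
        proof (cases "t1 = 0")
          case True
          then have "tbar m xs l = 0" using Y.t1_zero l unfolding t1_def by simp
          then show ?thesis using False by simp
        next
          case False
          then show ?thesis using t10 \<open>l = 1\<close> unfolding tst_def by simp
        qed
      next
        case l1: False
        then show ?thesis using False X.tbar_nonneg[of l] l unfolding tst_def by auto
      qed
    qed
    have b1: "(\<Sum>l=1..m. ph (t l)) - (\<Sum>l=1..m. ph (tst l)) \<le> (\<Sum>l=1..m. (- ln (tst l) - 1) * (t l - tst l))"
      unfolding sum_subtractf[symmetric]
      by (rule sum_mono) (use ph_tangent' posor tnn in auto)
    have b2: "ph N - ph Nst \<le> (- ln Nst - 1) * (N - Nst)" using ph_tangent Nst0 N0 by simp
    have b3: "ph M - ph Mst \<le> (- ln Mst - 1) * (M - Mst)" using ph_tangent Mst0 s0 M0 by simp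
    have b4: "ph N + ph (D - N) - ph D \<le> - N * ln \<alpha> - (D - N) * ln (1 - \<alpha>)"
      using pers_bound[OF N0 _ a0 a1] xs' unfolding D_def N_def by simp
    have b5: "ph Nst + ph (Dst - Nst) - ph Dst = - Nst * ln \<alpha> - (Dst - Nst) * ln (1 - \<alpha>)"
      using pers_eq[OF Nst0 NDst] unfolding \<alpha>_def .
    have DN: "D - N = s - x" "Dst - Nst = s" unfolding D_def N_def Dst_def Nst_def by simp_all
    define \<delta> where "\<delta> l = t l - tst l" for l
    define c1 where "c1 = - ln Nst - 1 - ln \<alpha>"
    define c2 where "c2 = ln Mst + 1"
    define G where "G l = (- ln (tst l) - 1) + real l * c1 + real (l+1) * c2" for l
    define Gx where "Gx = c1 + c2 + ln (1 - \<alpha>)"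
    have dW: "(\<Sum>l=1..m. real l * \<delta> l) = W - u"
      unfolding \<delta>_def W_def sW[symmetric] by (simp add: sum_subtractf[symmetric] algebra_simps)
    have dV: "(\<Sum>l=1..m. real (l+1) * \<delta> l) = T + W - P"
      unfolding \<delta>_def TW sP[symmetric] by (simp add: sum_subtractf[symmetric] algebra_simps)
    have sumG: "(\<Sum>l=1..m. \<delta> l * G l) = (\<Sum>l=1..m. (- ln (tst l) - 1) * \<delta> l) + c1 * (\<Sum>l=1..m. real l * \<delta> l) + c2 * (\<Sum>l=1..m. real (l+1) * \<delta> l)"
      unfolding G_def sum_distrib_left sum.distrib[symmetric] by (rule sum.cong) (auto simp: algebra_simps)
    have total: "Sfun q \<gamma> m \<sigma> y x t * ln (real q) - Sfun q \<gamma> m \<sigma> y 0 tst * ln (real q)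
        \<le> (\<Sum>l=1..m. \<delta> l * G l) + x * Gx"
    proof -
      have "Sfun q \<gamma> m \<sigma> y x t * ln (real q) - Sfun q \<gamma> m \<sigma> y 0 tst * ln (real q)
          \<le> (\<Sum>l=1..m. (- ln (tst l) - 1) * \<delta> l) + (- ln Nst - 1) * (N - Nst) + (- ln Mst - 1) * (M - Mst)
             + (- N * ln \<alpha> - (s - x) * ln (1 - \<alpha>)) - (- Nst * ln \<alpha> - s * ln (1 - \<alpha>))"
        using dec1 dec2 b1 b2 b3 b4 b5 unfolding DN \<delta>_def by (simp add: algebra_simps)
      also have "\<dots> = (\<Sum>l=1..m. \<delta> l * G l) + x * Gx"
        unfolding sumG dW dV Gx_def c1_def c2_def M_def N_def Nst_def Mst_def
        using TWst by (simp add: algebra_simps)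
      finally show ?thesis .
    qed
    have P0: "P \<ge> 0" unfolding P_def using xs_nonneg by (intro mult_nonneg_nonneg sum_nonneg) auto
    have KKT: "(\<Sum>l=1..m. \<delta> l * G l) \<le> 0"
    proof (cases "t1 = 0")
      case True
      have "\<delta> l * G l = 0" if l: "l \<in> {1..m}" for l
      proof -
        have "tbar m xs l = 0" using Y.t1_zero True l unfolding t1_def by simp
        then have "t l = 0" "tst l = 0" using tb l tst_bd[OF l] by force+
        then show ?thesis unfolding \<delta>_def by simp
      qed
      then have "(\<Sum>l=1..m. \<delta> l * G l) = 0" by (intro sum.neutral ballI) simp
      then show ?thesis by simp
    next
      case False
      then have t1p: "t1 > 0" using t10 by simp
      define lam where "lam = G 1 / 2"
      have lnNst: "ln Nst \<le> ln Dst" using Nst0 NDst by simp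
      have lna: "ln \<alpha> \<le> 0" using a0 by simp
      have G1: "G 1 = - ln t1 - ln Nst - ln \<alpha> + 2 * ln Mst"
        unfolding G_def c1_def c2_def tst_def by simp
      have "t1 * Nst * \<alpha> < Mst ^ 2"
      proof -
        have "1 \<in> {1..m}" using m_pos by simp
        from bspec[OF C2 this] have h: "tbar m xs 1 * (y + \<sigma> / \<gamma> + ustar m xs) ^ (2 * 1)
               < (1 - y - \<sigma> / \<gamma> - 2 * (\<Sum>\<nu>=1..m. real (\<nu> + 1) * xs \<nu>)) ^ (1 + 1)
                 * (y + \<sigma> / \<gamma>) ^ 1" .
        have e1: "Dst = y + \<sigma> / \<gamma> + ustar m xs" unfolding Dst_def s_def u_def ..
        have e2: "Mst - s = 1 - y - \<sigma> / \<gamma> - 2 * (\<Sum>\<nu>=1..m. real (\<nu> + 1) * xs \<nu>)"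
          unfolding Mst_def P_def s_def by simp
        have e3: "y + s = y + \<sigma> / \<gamma>" unfolding s_def ..
        have c2': "tbar m xs 1 * Dst ^ 2 < (Mst - s) ^ 2 * (y + s)"
          unfolding e1 e2 e3 using h by (simp add: power2_eq_square)
        have "t1 \<le> tbar m xs 1" using X.tstar_le[of 1] unfolding t1_def by simp
        then have "t1 * Nst ^ 2 \<le> tbar m xs 1 * Dst ^ 2"
          using t10 Nst0 NDst by (intro mult_mono power_mono) auto
        moreover have "(Mst - s) ^ 2 * (y + s) \<le> Mst ^ 2 * Dst"
          using Mst0 s0 y_pos u0 unfolding Dst_def by (intro mult_mono power_mono) auto
        ultimately have "t1 * Nst ^ 2 < Mst ^ 2 * Dst" using c2' by linarith
        then have "t1 * Nst ^ 2 / Dst < Mst ^ 2" using Dst0 by (simp add: divide_less_eq)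
        then show ?thesis unfolding \<alpha>_def by (simp add: power2_eq_square)
      qed
      then have "ln (t1 * Nst * \<alpha>) < ln (Mst ^ 2)" using t1p Nst0 a0 Mst0 s0 by (subst ln_less_cancel_iff) auto
      then have "ln t1 + ln Nst + ln \<alpha> < 2 * ln Mst" using t1p Nst0 a0 Mst0 s0
        by (simp add: ln_mult ln_realpow)
      then have lam0: "lam \<ge> 0" unfolding lam_def G1 by simp
      have each: "\<delta> l * G l \<le> lam * (real (l+1) * \<delta> l)" if l: "l \<in> {1..m}" for l
      proof (cases "l = 1")
        case True then show ?thesis unfolding lam_def by simp
      next
        case l1: False
        show ?thesis
        proof (cases "tbar m xs l = 0")
          case True
          then have "t l = 0" "tst l = 0" using tb l tst_bd[OF l] by force+
          then show ?thesis unfolding \<delta>_def by simp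
        next
          case False
          then have tbp: "tbar m xs l > 0" using X.tbar_nonneg[of l] l by simp
          have l2: "2 \<le> l" "l \<le> m" using l l1 by auto
          have Q: "2 * ln (tbar m xs l) + real (l-1) * ln Dst \<le> real (l+1) * ln t1"
            using Y.chainQ[OF t1p[unfolded t1_def] l2 tbp] unfolding t1_def .
          have rl: "real (l-1) = real l - 1" using l2 by simp
          have "(real l - 1) * (ln Nst + ln \<alpha>) \<le> (real l - 1) * ln Dst"
            using lnNst lna l2 by (intro mult_left_mono) auto
          moreover have "2 * (G l - lam * real (l+1)) = real (l+1) * ln t1 - 2 * ln (tbar m xs l) - (real l - 1) * (ln Nst + ln \<alpha>)"
            unfolding lam_def G1 unfolding G_def c1_def c2_def tst_def using l1 by (simp add: field_simps)
          ultimately have "G l - lam * real (l+1) \<ge> 0" using Q unfolding rl by (rule aux_lin)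
          then have "G l \<ge> lam * real (l+1)" by simp
          moreover have "\<delta> l \<le> 0" unfolding \<delta>_def tst_def using tb l l1 by auto
          ultimately have "\<delta> l * G l \<le> \<delta> l * (lam * real (l+1))" by (intro mult_left_mono_neg) auto
          then show ?thesis by (simp add: algebra_simps)
        qed
      qed
      have "(\<Sum>l=1..m. \<delta> l * G l) \<le> (\<Sum>l=1..m. lam * (real (l+1) * \<delta> l))"
        by (rule sum_mono) (use each in auto)
      also have "\<dots> = lam * (T + W - P)" unfolding sum_distrib_left[symmetric] dV ..
      also have "\<dots> \<le> 0" using lam0 TW sumc by (intro mult_nonneg_nonpos) auto
      finally show ?thesis .
    qed
    have xG: "x * Gx \<le> 0"
    proof (cases "s = 0")
      case True then show ?thesis using x0 xs' by simp
    next
      case False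
      then have sp: "s > 0" using s0 by simp
      have a1': "1 - \<alpha> = s / Dst" unfolding \<alpha>_def using Dst0 by (simp add: field_simps Dst_def Nst_def)
      have "Mst * s \<le> (1 - y) * s" using P0 s0 unfolding Mst_def by (intro mult_right_mono) auto
      also have "\<dots> < y ^ 2" using C3 unfolding s_def by (simp add: algebra_simps)
      also have "\<dots> \<le> Nst ^ 2" using y_pos u0 unfolding Nst_def by (intro power_mono) auto
      finally have "Mst * s < Nst ^ 2" .
      then have "Mst * s / Dst < Nst ^ 2 / Dst" using Dst0 by (rule divide_strict_right_mono)
      moreover have "Mst * (1 - \<alpha>) = Mst * s / Dst" unfolding a1' by simp
      moreover have "Nst * \<alpha> = Nst ^ 2 / Dst" unfolding \<alpha>_def by (simp add: power2_eq_square)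
      ultimately have "Mst * (1 - \<alpha>) < Nst * \<alpha>" by simp
      moreover have "Mst * (1 - \<alpha>) > 0" using Mst0 s0 sp Dst0 unfolding a1' by simp
      ultimately have "ln (Mst * (1 - \<alpha>)) < ln (Nst * \<alpha>)" using Nst0 a0 by (subst ln_less_cancel_iff) auto
      moreover have "ln (Mst * (1 - \<alpha>)) = ln Mst + ln (1 - \<alpha>)"
      proof -
        have "1 - \<alpha> > 0" unfolding a1' using sp Dst0 by simp
        then show ?thesis using Mst0 s0 by (simp add: ln_mult)
      qed
      moreover have "ln (Nst * \<alpha>) = ln Nst + ln \<alpha>" using Nst0 a0 by (simp add: ln_mult)
      ultimately have "Gx < 0" unfolding Gx_def c1_def c2_def by simp
      then show ?thesis using x0 by (simp add: mult_nonneg_nonpos)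
    qed
    have "Sfun q \<gamma> m \<sigma> y x t * ln (real q) \<le> Sfun q \<gamma> m \<sigma> y 0 tst * ln (real q)"
      using total KKT xG by simp
    then show ?thesis using lq by simp
  qed
  have "Ifun q \<gamma> m y xs \<sigma> = Sfun q \<gamma> m \<sigma> y 0 tst"
    unfolding Ifun_def
    by (rule cSup_eq_maximum) (use feas0 key in auto)
  then show ?thesis unfolding tst_eq .
qed



end
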